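(* Consider MDVI$(\alpha,K,M)$ with any $\alpha\in[0,1)$ and positive integers $K,M$ on an MDP as in the context. Then, for every realization of the samples and every $k\in\{1,\dots,K\}$, $\|v_{k-1}\|_\infty\le H$.
   Context: MDP: finite state set $\mathcal{X}$, finite action set $\mathcal{A}$, discount $\gamma\in[0,1)$, reward $r\in[-1,1]^{\mathcal{X}\times\mathcal{A}}$, transition kernel $P(y|x,a)$, $H=1/(1-\gamma)$. MDVI$(\alpha,K,M)$: $s_0 = 0$, $w_0=w_{-1}=0$; for $k=0,\dots,K-1$: $v_k = w_k-\alpha w_{k-1}$; for each $(x,a)$, independent samples $y_{k,m,x,a}\sim P(\cdot|x,a)$, $m\in[M]$; $q_{k+1}(x,a) = r(x,a)+\frac{\gamma}{M}\sum_m v_k(y_{k,m,x,a})$; $s_{k+1}=q_{k+1}+\alpha s_k$; $w_{k+1}(x)=\max_a s_{k+1}(x,a)$. *)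

theory Defs
  imports Complex_Main
begin

text \<open>Reward r x a, samples y k m x a (the m-th next-state sample, m < M, drawn at
  iteration k for the pair (x,a)). The recursion state at step k is the pair
  (s_k, w_{k-1}).\<close>

primrec mdvi_st ::
  "real \<Rightarrow> real \<Rightarrow> nat \<Rightarrow> ('x \<Rightarrow> 'a::finite \<Rightarrow> real)
   \<Rightarrow> (nat \<Rightarrow> nat \<Rightarrow> 'x \<Rightarrow> 'a \<Rightarrow> 'x) \<Rightarrow> nat
   \<Rightarrow> ('x \<Rightarrow> 'a \<Rightarrow> real) \<times> ('x \<Rightarrow> real)" where
  "mdvi_st \<gamma> \<alpha> M r y 0 = ((\<lambda>x a. 0), (\<lambda>x. 0))"
| "mdvi_st \<gamma> \<alpha> M r y (Suc k) =
     (let sk = fst (mdvi_st \<gamma> \<alpha> M r y k);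
          wprev = snd (mdvi_st \<gamma> \<alpha> M r y k);
          wk = (\<lambda>x. Max (range (sk x)));
          vk = (\<lambda>x. wk x - \<alpha> * wprev x)
      in ((\<lambda>x a. r x a + \<gamma> / real M * (\<Sum>m<M. vk (y k m x a)) + \<alpha> * sk x a), wk))"

definition mdvi_s where
  "mdvi_s \<gamma> \<alpha> M r y k = fst (mdvi_st \<gamma> \<alpha> M r y k)"

definition mdvi_w where
  "mdvi_w \<gamma> \<alpha> M r y k x = Max (range (mdvi_s \<gamma> \<alpha> M r y k x))"

definition mdvi_v where
  "mdvi_v \<gamma> \<alpha> M r y k x =
     mdvi_w \<gamma> \<alpha> M r y k x - \<alpha> * snd (mdvi_st \<gamma> \<alpha> M r y k) x"

definition sup_norm :: "('x::finite \<Rightarrow> real) \<Rightarrow> real" where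
  "sup_norm f = Max (range (\<lambda>x. \<bar>f x\<bar>))"

end

theory Submission
  imports Defs
begin

lemma maxlem:
  fixes q s :: "'a::finite \<Rightarrow> real"
  assumes "\<And>a. \<bar>q a\<bar> \<le> B" "0 \<le> \<alpha>"
  shows "\<bar>Max (range (\<lambda>a. q a + \<alpha> * s a)) - \<alpha> * Max (range s)\<bar> \<le> B"
proof -
  have "Max (range (\<lambda>a. q a + \<alpha> * s a)) \<in> range (\<lambda>a. q a + \<alpha> * s a)"
    by (rule Max_in) auto
  then obtain a1 where a1: "Max (range (\<lambda>a. q a + \<alpha> * s a)) = q a1 + \<alpha> * s a1" by blast
  have "Max (range s) \<in> range s" by (rule Max_in) auto
  then obtain a2 where a2: "Max (range s) = s a2" by blast
  have "s a1 \<le> Max (range s)" by (rule Max_ge) auto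
  hence u: "\<alpha> * s a1 \<le> \<alpha> * Max (range s)" using assms(2) by (simp add: mult_left_mono)
  have "q a2 + \<alpha> * s a2 \<le> Max (range (\<lambda>a. q a + \<alpha> * s a))" by (rule Max_ge) auto
  moreover have "\<bar>q a1\<bar> \<le> B" "\<bar>q a2\<bar> \<le> B" using assms(1) by auto
  ultimately show ?thesis using a1 a2 u by (simp add: abs_le_iff)
qed

lemma vbound:
  fixes r :: "'x::finite \<Rightarrow> 'a::finite \<Rightarrow> real"
    and y :: "nat \<Rightarrow> nat \<Rightarrow> 'x \<Rightarrow> 'a \<Rightarrow> 'x"
  assumes "0 \<le> \<gamma>" "\<gamma> < 1" "\<And>x a. \<bar>r x a\<bar> \<le> 1" "0 \<le> \<alpha>" "0 < M"
  shows "\<bar>mdvi_v \<gamma> \<alpha> M r y k x\<bar> \<le> 1 / (1 - \<gamma>)"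
proof (induction k arbitrary: x)
  case 0
  have "0 \<le> 1 / (1 - \<gamma>)" using assms by simp
  then show ?case by (simp add: mdvi_v_def mdvi_w_def mdvi_s_def)
next
  case (Suc k)
  define H where "H = 1 / (1 - \<gamma>)"
  have H: "1 + \<gamma> * H = H" using assms(2) unfolding H_def by (simp add: field_simps)
  define v where "v = mdvi_v \<gamma> \<alpha> M r y k"
  define s where "s = mdvi_s \<gamma> \<alpha> M r y k"
  define q where "q = (\<lambda>x a. r x a + \<gamma> / real M * (\<Sum>m<M. v (y k m x a)))"
  have vdef: "Max (range (fst (mdvi_st \<gamma> \<alpha> M r y k) z)) - \<alpha> * snd (mdvi_st \<gamma> \<alpha> M r y k) z = v z" for z
    unfolding v_def mdvi_v_def mdvi_w_def mdvi_s_def by simp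
  have eq: "mdvi_v \<gamma> \<alpha> M r y (Suc k) x = Max (range (\<lambda>a. q x a + \<alpha> * s x a)) - \<alpha> * Max (range (s x))"
    unfolding mdvi_v_def mdvi_w_def mdvi_s_def
    by (simp add: Let_def vdef q_def s_def mdvi_s_def)
  have qb: "\<bar>q x a\<bar> \<le> H" for a
  proof -
    have "\<bar>\<Sum>m<M. v (y k m x a)\<bar> \<le> (\<Sum>m<M. \<bar>v (y k m x a)\<bar>)" by (rule sum_abs)
    also have "\<dots> \<le> (\<Sum>m<M. H)" by (rule sum_mono) (use Suc.IH in \<open>simp add: v_def H_def\<close>)
    finally have sb: "\<bar>\<Sum>m<M. v (y k m x a)\<bar> \<le> real M * H" by simp
    have "\<bar>\<gamma> / real M * (\<Sum>m<M. v (y k m x a))\<bar> = \<gamma> / real M * \<bar>\<Sum>m<M. v (y k m x a)\<bar>"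
      using assms by (simp add: abs_mult)
    also have "\<dots> \<le> \<gamma> / real M * (real M * H)" by (rule mult_left_mono[OF sb]) (use assms in simp)
    also have "\<dots> = \<gamma> * H" using assms by simp
    finally have "\<bar>\<gamma> / real M * (\<Sum>m<M. v (y k m x a))\<bar> \<le> \<gamma> * H" .
    moreover have "\<bar>r x a\<bar> \<le> 1" by (rule assms(3))
    ultimately have "\<bar>q x a\<bar> \<le> 1 + \<gamma> * H" unfolding q_def by linarith
    thus ?thesis using H by simp
  qed
  show ?case unfolding eq H_def[symmetric] by (rule maxlem[OF qb assms(4)])
qed

theorem lemma24:
  fixes P :: "'x::finite \<Rightarrow> 'x \<Rightarrow> 'a::finite \<Rightarrow> real"
    and r :: "'x \<Rightarrow> 'a \<Rightarrow> real"
    and y :: "nat \<Rightarrow> nat \<Rightarrow> 'x \<Rightarrow> 'a \<Rightarrow> 'x"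
    and \<gamma> \<alpha> :: real and K M k :: nat
  assumes "0 \<le> \<gamma>" "\<gamma> < 1"
    and "\<And>x a. \<bar>r x a\<bar> \<le> 1"
    and "\<And>z x a. 0 \<le> P z x a" "\<And>x a. (\<Sum>z\<in>UNIV. P z x a) = 1"
    and "0 \<le> \<alpha>" "\<alpha> < 1" "0 < K" "0 < M"
    and "\<And>j m x a. 0 < P (y j m x a) x a"
    and "1 \<le> k" "k \<le> K"
  shows "sup_norm (mdvi_v \<gamma> \<alpha> M r y (k - 1)) \<le> 1 / (1 - \<gamma>)"
proof -
  have "Max (range (\<lambda>x. \<bar>mdvi_v \<gamma> \<alpha> M r y (k - 1) x\<bar>)) \<in> range (\<lambda>x. \<bar>mdvi_v \<gamma> \<alpha> M r y (k - 1) x\<bar>)"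
    by (rule Max_in) auto
  then obtain x where "sup_norm (mdvi_v \<gamma> \<alpha> M r y (k - 1)) = \<bar>mdvi_v \<gamma> \<alpha> M r y (k - 1) x\<bar>"
    unfolding sup_norm_def by blast
  then show ?thesis using vbound[OF assms(1,2,3,6,9)] by simp
qed

end
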